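(* Let $L\ge K>0$, $m\ge 1$, $d\ge 1$. For an $L$-layer MinAgg GNN $\mathcal A_\theta$ with hidden dimension $d$ and $m$-layer aggregation and update MLPs, there is an assignment of the parameters $\theta$ with exactly $mL+mK+K$ nonzero entries (all biases zero) such that $\mathcal A_\theta(G)=\Gamma^K(G)$ for every $G\in\mathscr G$, i.e. $h^{(L)}_v(G)=x_v(\Gamma^K(G))$ for all $v\in V(G)$.
   Context: Attributed graphs: $G=(V,E,X_{\mathrm v},X_{\mathrm e})$ with $V$ finite, $E$ a set of undirected edges, nonnegative edge weights $x_{(u,v)}=x_{(v,u)}\ge 0$ and nonnegative real node features $x_v$. Every node carries a self-loop of weight $x_{(v,v)}=0$, and $\mathcal N(v)=\{v\}\cup\{u:\{u,v\}\in E\}$. A constant $\beta>0$ is fixed; $\mathscr G$ is the set of attributed graphs with $\sum_{e\in E}x_e<\beta$. $x_v(H)$ is the feature of $v$ in $H$. The Bellman–Ford operator $\Gamma$ sends $G$ to the graph with the same vertices, edges and edge weights and node features $x'_v=\min\{x_u+x_{(u,v)}:u\in\mathcal N(v)\}$; $\Gamma^K$ is its $K$-fold iterate. An $m$-layer ReLU MLP $f:\mathbb R^{n_0}\to\mathbb R^{n_m}$ has parameters $W_j\in\mathbb R^{n_j\times n_{j-1}}$, $b_j\in\mathbb R^{n_j}$ ($j\in[m]$) and computes $x^{(0)}=x$, $x^{(j)}=\sigma(W_jx^{(j-1)}+b_j)$, $f(x)=x^{(m)}$, where $\sigma$ is componentwise ReLU. MinAgg GNN: an $L$-layer MinAgg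 GNN $\mathcal A_\theta$ with hidden dimension $d$ and $m$-layer MLPs consists, for each $\ell\in[L]$, of $m$-layer ReLU MLPs $f^{\mathrm{agg},(\ell)}:\mathbb R^{d_{\ell-1}+1}\to\mathbb R^d$ and $f^{\mathrm{up},(\ell)}:\mathbb R^{d+d_{\ell-1}}\to\mathbb R^{d_\ell}$ (internal widths $d$), where $d_0=d_L=1$ and $d_\ell=d$ for $0<\ell<L$. On input $G$: $h^{(0)}_v=x_v$ and $$h^{(\ell)}_v=f^{\mathrm{up},(\ell)}\Big(\min_{u\in\mathcal N(v)}f^{\mathrm{agg},(\ell)}\big(h^{(\ell-1)}_u\oplus x_{(u,v)}\big)\oplus h^{(\ell-1)}_v\Big),$$ with $\min$ taken coordinatewise and $\oplus$ concatenation. The output $\mathcal A_\theta(G)$ is $G$ with node features replaced by $h^{(L)}_v$. $\theta$ is the collection of all weight and bias entries of all these MLPs. *)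

theory Defs
  imports Complex_Main
begin

text \<open>Vertices are natural numbers (every finite graph is isomorphic to one on nat).
  Undirected edges are 2-element sets {u,v}, u \<noteq> v. ew gives edge weights,
  nf gives (scalar) node features.\<close>

record agraph =
  verts :: "nat set"
  edges :: "nat set set"
  ew    :: "nat set \<Rightarrow> real"
  nf    :: "nat \<Rightarrow> real"

definition edge_w :: "agraph \<Rightarrow> nat \<Rightarrow> nat \<Rightarrow> real" where
  "edge_w G u v = (if u = v then 0 else ew G {u, v})"

definition nbhd :: "agraph \<Rightarrow> nat \<Rightarrow> nat set" where
  "nbhd G v = {v} \<union> {u. {u, v} \<in> edges G}"

definition in_graph_class :: "real \<Rightarrow> agraph \<Rightarrow> bool" where
  "in_graph_class \<beta> G \<longleftrightarrow>
     finite (verts G) \<and>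
     (\<forall>e\<in>edges G. \<exists>u v. e = {u, v} \<and> u \<noteq> v \<and> u \<in> verts G \<and> v \<in> verts G) \<and>
     (\<forall>e\<in>edges G. ew G e \<ge> 0) \<and>
     (\<forall>v\<in>verts G. nf G v \<ge> 0) \<and>
     (\<Sum>e\<in>edges G. ew G e) < \<beta>"

definition bf_step :: "agraph \<Rightarrow> agraph" where
  "bf_step G = G\<lparr> nf := (\<lambda>v. Min ((\<lambda>u. nf G u + edge_w G u v) ` nbhd G v)) \<rparr>"

text \<open>A layer is (W, b), W given as list of rows. Vectors are real lists.\<close>
type_synonym layer = "real list list \<times> real list"

definition relu :: "real \<Rightarrow> real" where
  "relu t = max 0 t"

definition layer_apply :: "layer \<Rightarrow> real list \<Rightarrow> real list" where
  "layer_apply Wb x = map2 (\<lambda>row bi. relu (sum_list (map2 (*) row x) + bi)) (fst Wb) (snd Wb)"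

definition mlp_apply :: "layer list \<Rightarrow> real list \<Rightarrow> real list" where
  "mlp_apply ls x = foldl (\<lambda>y l. layer_apply l y) x ls"

definition mlp_shape :: "nat \<Rightarrow> nat \<Rightarrow> nat \<Rightarrow> nat \<Rightarrow> layer list \<Rightarrow> bool" where
  "mlp_shape n0 d nout m ls \<longleftrightarrow> length ls = m \<and>
     (\<forall>j<m. let W = fst (ls ! j); b = snd (ls ! j);
                 ni = (if j = 0 then n0 else d); no = (if j = m - 1 then nout else d)
             in length W = no \<and> length b = no \<and> (\<forall>row\<in>set W. length row = ni))"

definition layer_nnz :: "layer \<Rightarrow> nat" where
  "layer_nnz Wb = sum_list (map (\<lambda>row. length (filter (\<lambda>t. t \<noteq> 0) row)) (fst Wb))
                  + length (filter (\<lambda>t. t \<noteq> 0) (snd Wb))"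

definition mlp_nnz :: "layer list \<Rightarrow> nat" where
  "mlp_nnz ls = sum_list (map layer_nnz ls)"

definition mlp_biases_zero :: "layer list \<Rightarrow> bool" where
  "mlp_biases_zero ls \<longleftrightarrow> (\<forall>l\<in>set ls. \<forall>t\<in>set (snd l). t = 0)"

text \<open>Parameters: for each layer (0-based index \<ell>), the pair (f_agg, f_up).\<close>
type_synonym gnn_params = "(layer list \<times> layer list) list"

definition gnn_shape :: "nat \<Rightarrow> nat \<Rightarrow> nat \<Rightarrow> gnn_params \<Rightarrow> bool" where
  "gnn_shape L d m \<theta> \<longleftrightarrow> length \<theta> = L \<and>
     (\<forall>l<L. let din = (if l = 0 then 1 else d); dout = (if l = L - 1 then 1 else d)
            in mlp_shape (din + 1) d d m (fst (\<theta> ! l)) \<and>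
               mlp_shape (d + din) d dout m (snd (\<theta> ! l)))"

definition gnn_nnz :: "gnn_params \<Rightarrow> nat" where
  "gnn_nnz \<theta> = sum_list (map (\<lambda>p. mlp_nnz (fst p) + mlp_nnz (snd p)) \<theta>)"

definition gnn_biases_zero :: "gnn_params \<Rightarrow> bool" where
  "gnn_biases_zero \<theta> \<longleftrightarrow> (\<forall>p\<in>set \<theta>. mlp_biases_zero (fst p) \<and> mlp_biases_zero (snd p))"

definition gnn_layer :: "nat \<Rightarrow> agraph \<Rightarrow> layer list \<times> layer list
                          \<Rightarrow> (nat \<Rightarrow> real list) \<Rightarrow> (nat \<Rightarrow> real list)" where
  "gnn_layer d G p h = (\<lambda>v.
     mlp_apply (snd p)
       (map (\<lambda>i. Min ((\<lambda>u. mlp_apply (fst p) (h u @ [edge_w G u v]) ! i) ` nbhd G v)) [0..<d]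
        @ h v))"

definition gnn_eval :: "nat \<Rightarrow> agraph \<Rightarrow> gnn_params \<Rightarrow> nat \<Rightarrow> real list" where
  "gnn_eval d G \<theta> = foldl (\<lambda>h p. gnn_layer d G p h) (\<lambda>v. [nf G v]) \<theta>"

end

theory Submission
  imports Defs
begin

definition ev :: "nat \<Rightarrow> real \<Rightarrow> real list" where
  "ev n a = a # replicate (n - 1) 0"
definition uvec :: "nat \<Rightarrow> nat \<Rightarrow> real list" where
  "uvec n i = replicate i 0 @ 1 # replicate (n - i - 1) 0"
definition tworow :: "nat \<Rightarrow> real list" where
  "tworow n = (1 # replicate (n - 1) 0) @ [1]"
definition mkl :: "nat \<Rightarrow> real list \<Rightarrow> layer" where
  "mkl no r = (r # replicate (no - 1) (replicate (length r) 0), replicate no 0)"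
definition mlp_of :: "nat \<Rightarrow> nat \<Rightarrow> nat \<Rightarrow> real list \<Rightarrow> layer list" where
  "mlp_of d nout m r0 = map (\<lambda>j. mkl (if j = m - 1 then nout else d) (if j = 0 then r0 else uvec d 0)) [0..<m]"
definition zmlp :: "nat \<Rightarrow> nat \<Rightarrow> nat \<Rightarrow> nat \<Rightarrow> layer list" where
  "zmlp n0 d nout m = map (\<lambda>j. (replicate (if j = m - 1 then nout else d) (replicate (if j = 0 then n0 else d) 0),
      replicate (if j = m - 1 then nout else d) 0)) [0..<m]"

lemma dot_zero: "sum_list (map2 (*) (replicate n (0::real)) x) = 0"
proof (induction n arbitrary: x)
  case 0 show ?case by simp
next
  case (Suc n) then show ?case by (cases x) auto
qed

lemma dot_unit: "i < length (x::real list) \<Longrightarrow> sum_list (map2 (*) (replicate i 0 @ c # replicate k 0) x) = c * x ! i"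
proof (induction i arbitrary: x)
  case 0 then show ?case by (cases x) (auto simp: dot_zero)
next
  case (Suc i) then show ?case by (cases x) auto
qed

lemma relu_nonneg: "relu t \<ge> 0" by (simp add: relu_def)
lemma relu_id: "t \<ge> 0 \<Longrightarrow> relu t = t" by (simp add: relu_def)

lemma ev_nth: "i < n \<Longrightarrow> ev n c ! i = (if i = 0 then c else 0)"
  by (cases i) (auto simp: ev_def)
lemma ev_len: "1 \<le> n \<Longrightarrow> length (ev n c) = n" by (simp add: ev_def)

lemma layer_mkl: assumes "no \<ge> 1"
  shows "layer_apply (mkl no r) x = ev no (relu (sum_list (map2 (*) r x)))"
proof -
  obtain k where k: "no = Suc k" using assms by (cases no) auto
  show ?thesis unfolding layer_apply_def mkl_def ev_def k
    by (simp add: dot_zero relu_def)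
qed

lemma mlp_of_apply:
  assumes "1 \<le> m" "1 \<le> d" "1 \<le> nout"
  shows "mlp_apply (mlp_of d nout m r0) x = ev nout (relu (sum_list (map2 (*) r0 x)))"
proof -
  define no where "no = (\<lambda>j. if j = m - 1 then nout else d)"
  define f where "f = (\<lambda>j. mkl (no j) (if j = 0 then r0 else uvec d 0))"
  define a where "a = relu (sum_list (map2 (*) r0 x))"
  have a0: "a \<ge> 0" by (simp add: a_def relu_nonneg)
  have no1: "no j \<ge> 1" for j using assms by (simp add: no_def)
  have "1 \<le> k \<longrightarrow> k \<le> m \<longrightarrow> foldl (\<lambda>y l. layer_apply l y) x (map f [0..<k]) = ev (no (k - 1)) a" for k
  proof (induction k)
    case 0 then show ?case by simp
  next
    case (Suc k)
    show ?case
    proof (cases "k = 0")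
      case True then show ?thesis by (simp add: f_def layer_mkl[OF no1] a_def)
    next
      case False
      show ?thesis
      proof (intro impI)
        assume "Suc k \<le> m"
        then have ih: "foldl (\<lambda>y l. layer_apply l y) x (map f [0..<k]) = ev (no (k - 1)) a"
          using Suc False by simp
        have nod: "no (k - 1) = d" using False \<open>Suc k \<le> m\<close> by (auto simp add: no_def)
        have "sum_list (map2 (*) (uvec d 0) (ev d a)) = a"
          using dot_unit[of 0 "ev d a" 1 "d - 0 - 1"] assms by (simp add: uvec_def ev_len ev_nth)
        then show "foldl (\<lambda>y l. layer_apply l y) x (map f [0..<Suc k]) = ev (no (Suc k - 1)) a"
          using ih nod False by (simp add: f_def layer_mkl[OF no1] relu_id a0)
      qed
    qed
  qed
  from this[of m] assms show ?thesis
    by (simp add: mlp_apply_def mlp_of_def f_def no_def a_def)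
qed


abbreviation nnzl :: "real list \<Rightarrow> nat" where "nnzl r \<equiv> length (filter (\<lambda>t. t \<noteq> 0) r)"

lemma nnz_mkl: "layer_nnz (mkl no r) = nnzl r"
  by (simp add: layer_nnz_def mkl_def filter_replicate)

lemma nnz_uvec: "nnzl (uvec n i) = 1"
  by (simp add: uvec_def filter_replicate)

lemma nnz_tworow: "nnzl (tworow n) = 2"
  by (simp add: tworow_def filter_replicate)

lemma nnz_mlp_of: assumes "1 \<le> m" shows "mlp_nnz (mlp_of d nout m r0) = nnzl r0 + (m - 1)"
proof -
  have u: "[0..<m] = 0 # [1..<m]" using assms by (simp add: upt_conv_Cons)
  have "mlp_nnz (mlp_of d nout m r0) = nnzl r0 + sum_list (map (\<lambda>j. 1) [1..<m])"
    unfolding mlp_nnz_def mlp_of_def u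
    by (simp add: nnz_mkl nnz_uvec, intro arg_cong[where f=sum_list] map_cong) (auto simp: nnz_uvec nnz_mkl)
  then show ?thesis by (simp add: sum_list_triv)
qed

lemma nnz_zmlp: "mlp_nnz (zmlp n0 d nout m) = 0"
  by (simp add: mlp_nnz_def zmlp_def layer_nnz_def filter_replicate comp_def)

lemma bz_mlp_of: "mlp_biases_zero (mlp_of d nout m r0)"
  by (auto simp: mlp_biases_zero_def mlp_of_def mkl_def)

lemma bz_zmlp: "mlp_biases_zero (zmlp n0 d nout m)"
  by (auto simp: mlp_biases_zero_def zmlp_def)

lemma shape_mlp_of: assumes "length r0 = n0" "1 \<le> d" "1 \<le> nout"
  shows "mlp_shape n0 d nout m (mlp_of d nout m r0)"
  using assms by (auto simp: mlp_shape_def mlp_of_def mkl_def uvec_def Let_def)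

lemma shape_zmlp: "mlp_shape n0 d nout m (zmlp n0 d nout m)"
  by (auto simp: mlp_shape_def zmlp_def Let_def)


lemma dot_uvec: "i < length x \<Longrightarrow> sum_list (map2 (*) (uvec n i) x) = x ! i"
  using dot_unit[of i x 1 "n - i - 1"] by (simp add: uvec_def)

lemma min_nonneg: "finite A \<Longrightarrow> x \<in> A \<Longrightarrow> \<forall>u\<in>A. (0::real) \<le> f u \<Longrightarrow> 0 \<le> Min (f ` A)"
  by (subst Min_ge_iff) auto

lemma bf_struct: "verts ((bf_step^^k) G) = verts G \<and> edges ((bf_step^^k) G) = edges G \<and> ew ((bf_step^^k) G) = ew G"
  by (induction k) (auto simp: bf_step_def)

lemma bf_nbhd: "nbhd ((bf_step^^k) G) = nbhd G"
  using bf_struct[of k G] by (auto simp: nbhd_def)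

lemma bf_edge_w: "edge_w ((bf_step^^k) G) = edge_w G"
  using bf_struct[of k G] by (auto simp: edge_w_def fun_eq_iff)

lemma bf_Suc: "nf ((bf_step^^Suc k) G) v = Min ((\<lambda>u. nf ((bf_step^^k) G) u + edge_w G u v) ` nbhd G v)"
  by (simp add: bf_step_def bf_nbhd bf_edge_w)

lemma nbhd_sub: assumes "in_graph_class \<beta> G" "v \<in> verts G" shows "nbhd G v \<subseteq> verts G"
proof
  fix u assume "u \<in> nbhd G v"
  then consider "u = v" | "{u, v} \<in> edges G" by (auto simp: nbhd_def)
  then show "u \<in> verts G"
  proof cases
    case 1 then show ?thesis using assms by simp
  next
    case 2
    then obtain a b where "{u, v} = {a, b}" "a \<in> verts G" "b \<in> verts G"
      using assms(1) unfolding in_graph_class_def by blast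
    then show ?thesis by (auto simp: doubleton_eq_iff)
  qed
qed

lemma nbhd_fin: assumes "in_graph_class \<beta> G" "v \<in> verts G" shows "finite (nbhd G v)" "v \<in> nbhd G v"
  using nbhd_sub[OF assms] assms finite_subset unfolding in_graph_class_def
  by (auto simp: nbhd_def)

lemma edge_nonneg: assumes "in_graph_class \<beta> G" "u \<in> nbhd G v" shows "edge_w G u v \<ge> 0"
  using assms by (auto simp: edge_w_def nbhd_def in_graph_class_def)

lemma bf_nonneg: assumes "in_graph_class \<beta> G" shows "v \<in> verts G \<Longrightarrow> nf ((bf_step^^k) G) v \<ge> 0"
proof (induction k arbitrary: v)
  case 0 then show ?case using assms by (simp add: in_graph_class_def)
next
  case (Suc k)
  have "\<forall>u\<in>nbhd G v. 0 \<le> nf ((bf_step^^k) G) u + edge_w G u v"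
    using Suc.IH nbhd_sub[OF assms Suc.prems] edge_nonneg[OF assms] by (meson add_nonneg_nonneg subsetD)
  then show ?case using min_nonneg[OF nbhd_fin[OF assms Suc.prems]] bf_Suc[of k G v] by simp
qed

lemma bf_layer:
  assumes G: "in_graph_class \<beta> G" and v: "v \<in> verts G"
    and h: "\<forall>u\<in>verts G. h u = ev dn (a u)" and a: "\<forall>u\<in>verts G. a u \<ge> 0"
    and "1 \<le> dn" "1 \<le> d" "1 \<le> m" "1 \<le> no"
  shows "gnn_layer d G (mlp_of d d m (tworow dn), mlp_of d no m (uvec (d + dn) 0)) h v
           = ev no (Min ((\<lambda>u. a u + edge_w G u v) ` nbhd G v))"
proof -
  have agg: "mlp_apply (mlp_of d d m (tworow dn)) (h u @ [edge_w G u v]) = ev d (a u + edge_w G u v)"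
    if u: "u \<in> nbhd G v" for u
  proof -
    have uv: "u \<in> verts G" using nbhd_sub[OF G v] u by blast
    have "sum_list (map2 (*) (tworow dn) (h u @ [edge_w G u v])) = a u + edge_w G u v"
      using h uv \<open>1 \<le> dn\<close> by (simp add: tworow_def ev_def dot_zero sum_list_replicate)
    moreover have "a u + edge_w G u v \<ge> 0" using a uv edge_nonneg[OF G u] by simp
    ultimately show ?thesis using assms by (simp add: mlp_of_apply relu_id)
  qed
  define M where "M = Min ((\<lambda>u. a u + edge_w G u v) ` nbhd G v)"
  have img: "(\<lambda>u. mlp_apply (mlp_of d d m (tworow dn)) (h u @ [edge_w G u v]) ! 0) ` nbhd G v
        = (\<lambda>u. a u + edge_w G u v) ` nbhd G v"
    using agg assms by (auto simp: ev_nth intro!: image_cong)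
  have M0: "M \<ge> 0"
  proof -
    have "\<forall>u\<in>nbhd G v. 0 \<le> a u + edge_w G u v"
      using a nbhd_sub[OF G v] edge_nonneg[OF G] by (meson add_nonneg_nonneg subsetD)
    then show ?thesis unfolding M_def by (rule min_nonneg[OF nbhd_fin[OF G v]])
  qed
  let ?mins = "map (\<lambda>i. Min ((\<lambda>u. mlp_apply (mlp_of d d m (tworow dn)) (h u @ [edge_w G u v]) ! i) ` nbhd G v)) [0..<d]"
  have "sum_list (map2 (*) (uvec (d + dn) 0) (?mins @ h v)) = M"
    using assms by (simp add: dot_uvec nth_append img M_def)
  then show ?thesis
    unfolding gnn_layer_def using assms by (simp add: mlp_of_apply relu_id M0 M_def[symmetric])
qed

lemma id_layer:
  assumes hv: "h v = ev dn av" and "av \<ge> 0" "1 \<le> dn" "1 \<le> d" "1 \<le> m" "1 \<le> no"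
  shows "gnn_layer d G (zmlp n0 d d m, mlp_of d no m (uvec (d + dn) d)) h v = ev no av"
proof -
  let ?mins = "map (\<lambda>i. Min ((\<lambda>u. mlp_apply (zmlp n0 d d m) (h u @ [edge_w G u v]) ! i) ` nbhd G v)) [0..<d]"
  have "sum_list (map2 (*) (uvec (d + dn) d) (?mins @ h v)) = av"
    using assms by (simp add: dot_uvec nth_append ev_def)
  then show ?thesis
    unfolding gnn_layer_def using assms by (simp add: mlp_of_apply relu_id)
qed


lemma len_uvec: "i < n \<Longrightarrow> length (uvec n i) = n" by (simp add: uvec_def)
lemma len_uvec2: "1 \<le> k \<Longrightarrow> length (uvec (d + k) d) = d + k" by (simp add: uvec_def)
lemma len_tworow: "1 \<le> n \<Longrightarrow> length (tworow n) = n + 1" by (simp add: tworow_def)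

theorem mainTheorem5:
  fixes L K m d :: nat and \<beta> :: real
  assumes "0 < K" and "K \<le> L" and "1 \<le> m" and "1 \<le> d" and "0 < \<beta>"
  shows "\<exists>\<theta>. gnn_shape L d m \<theta> \<and> gnn_biases_zero \<theta> \<and>
             gnn_nnz \<theta> = m * L + m * K + K \<and>
             (\<forall>G. in_graph_class \<beta> G \<longrightarrow>
                 (\<forall>v\<in>verts G. gnn_eval d G \<theta> v = [nf ((bf_step ^^ K) G) v]))"
proof -
  define din where "din = (\<lambda>l::nat. if l = 0 then 1 else d)"
  define dout where "dout = (\<lambda>l::nat. if l = L - 1 then 1 else d)"
  define P where "P = (\<lambda>l. if l < K
     then (mlp_of d d m (tworow (din l)), mlp_of d (dout l) m (uvec (d + din l) 0))
     else (zmlp (din l + 1) d d m, mlp_of d (dout l) m (uvec (d + din l) d)))"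
  define \<theta> where "\<theta> = map P [0..<L]"
  have din1: "1 \<le> din l" for l using assms by (simp add: din_def)
  have dout1: "1 \<le> dout l" for l using assms by (simp add: dout_def)
  have shape: "gnn_shape L d m \<theta>"
    unfolding gnn_shape_def Let_def
  proof (intro conjI allI impI)
    show "length \<theta> = L" by (simp add: \<theta>_def)
  next
    fix l assume l: "l < L"
    have "mlp_shape (din l + 1) d d m (fst (P l)) \<and> mlp_shape (d + din l) d (dout l) m (snd (P l))"
      using assms din1 dout1 by (auto simp: P_def len_tworow len_uvec len_uvec2 intro!: shape_mlp_of shape_zmlp)
    then show "mlp_shape ((if l = 0 then 1 else d) + 1) d d m (fst (\<theta> ! l))"
      "mlp_shape (d + (if l = 0 then 1 else d)) d (if l = L - 1 then 1 else d) m (snd (\<theta> ! l))"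
      using l by (simp_all add: \<theta>_def din_def dout_def)
  qed
  have bz: "gnn_biases_zero \<theta>"
    by (auto simp: gnn_biases_zero_def \<theta>_def P_def bz_mlp_of bz_zmlp)
  have nnz: "gnn_nnz \<theta> = m * L + m * K + K"
  proof -
    define g where "g = (\<lambda>l::nat. if l < K then 2 * m + 1 else m)"
    have "gnn_nnz \<theta> = sum_list (map g [0..<L])"
      unfolding gnn_nnz_def \<theta>_def map_map
      by (intro arg_cong[where f=sum_list] map_cong)
         (use assms(3) in \<open>auto simp: g_def P_def comp_def nnz_mlp_of[OF assms(3)] nnz_zmlp nnz_tworow nnz_uvec\<close>)
    also have "[0..<L] = [0..<K] @ [K..<L]"
      using upt_add_eq_append[of 0 K "L - K"] assms by simp
    also have "sum_list (map g ([0..<K] @ [K..<L])) = sum_list (map (\<lambda>_. 2 * m + 1) [0..<K]) + sum_list (map (\<lambda>_. m) [K..<L])"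
      unfolding map_append sum_list_append
      by (intro arg_cong2[where f="(+)"] arg_cong[where f=sum_list] map_cong) (auto simp: g_def)
    also have "\<dots> = K * (2 * m + 1) + (L - K) * m" by (simp add: sum_list_triv)
    also have "\<dots> = m * L + m * K + K"
    proof -
      obtain j where "L = K + j" using assms le_Suc_ex by blast
      then show ?thesis by (simp add: algebra_simps)
    qed
    finally show ?thesis .
  qed
  have eval: "\<forall>G. in_graph_class \<beta> G \<longrightarrow> (\<forall>v\<in>verts G. gnn_eval d G \<theta> v = [nf ((bf_step ^^ K) G) v])"
  proof (intro allI impI)
    fix G assume G: "in_graph_class \<beta> G"
    define H where "H = (\<lambda>n. foldl (\<lambda>h p. gnn_layer d G p h) (\<lambda>v. [nf G v]) (map P [0..<n]))"
    define dim where "dim = (\<lambda>n::nat. if n = 0 \<or> n = L then 1 else d)"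
    have inv: "n \<le> L \<longrightarrow> (\<forall>v\<in>verts G. H n v = ev (dim n) (nf ((bf_step ^^ min n K) G) v))" for n
    proof (induction n)
      case 0 then show ?case by (simp add: H_def ev_def dim_def)
    next
      case (Suc n)
      show ?case
      proof (intro impI ballI)
        fix v assume nL: "Suc n \<le> L" and v: "v \<in> verts G"
        have IH: "\<forall>u\<in>verts G. H n u = ev (din n) (nf ((bf_step ^^ min n K) G) u)"
          using Suc.IH nL by (simp add: dim_def din_def)
        have dd: "dout n = dim (Suc n)" using nL by (auto simp: dout_def dim_def)
        have HS: "H (Suc n) v = gnn_layer d G (P n) (H n) v" by (simp add: H_def)
        show "H (Suc n) v = ev (dim (Suc n)) (nf ((bf_step ^^ min (Suc n) K) G) v)"
        proof (cases "n < K")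
          case True
          have "gnn_layer d G (P n) (H n) v
              = ev (dout n) (Min ((\<lambda>u. nf ((bf_step ^^ min n K) G) u + edge_w G u v) ` nbhd G v))"
          proof -
            have "P n = (mlp_of d d m (tworow (din n)), mlp_of d (dout n) m (uvec (d + din n) 0))"
              using True by (simp add: P_def)
            moreover have "\<forall>u\<in>verts G. 0 \<le> nf ((bf_step ^^ min n K) G) u"
              using bf_nonneg[OF G] by blast
            ultimately show ?thesis
              using bf_layer[OF G v IH _ din1 assms(4) assms(3) dout1] by simp
          qed
          also have "\<dots> = ev (dim (Suc n)) (nf ((bf_step ^^ min (Suc n) K) G) v)"
            using True dd bf_Suc[of n G v] by simp
          finally show ?thesis using HS by simp
        next
          case False
          have "gnn_layer d G (P n) (H n) v = ev (dout n) (nf ((bf_step ^^ min n K) G) v)"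
          proof -
            have "P n = (zmlp (din n + 1) d d m, mlp_of d (dout n) m (uvec (d + din n) d))"
              using False by (simp add: P_def)
            then show ?thesis
              using id_layer[of "H n" v "din n", OF _ bf_nonneg[OF G v] din1 assms(4) assms(3) dout1] IH v
              by simp
          qed
          then show ?thesis using HS dd False by simp
        qed
      qed
    qed
    show "\<forall>v\<in>verts G. gnn_eval d G \<theta> v = [nf ((bf_step ^^ K) G) v]"
      using inv[of L] assms by (simp add: gnn_eval_def H_def \<theta>_def dim_def ev_def)
  qed
  show ?thesis using shape bz nnz eval by blast
qed

end
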